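(* Consider algorithm TRIEST-BASE (described in the context) run with integer parameter $M\ge 6$ on an insertion-only edge stream. For every time $t$: if $t\le M$ then $\xi^{(t)}\tau^{(t)}=\tau^{(t)}=|\Delta^{(t)}|$, and if $t>M$ then $\mathbb{E}\left[\xi^{(t)}\tau^{(t)}\right]=|\Delta^{(t)}|$.
   Context: An insertion-only edge stream: at each time step $t=1,2,\dots$ an edge $e_t=\{u,v\}$ between two distinct vertices arrives, which is not already present; $G^{(t)}=(V^{(t)},E^{(t)})$ with $E^{(t)}=\{e_1,\dots,e_t\}$. A triangle in $G^{(t)}$ is a set of three edges $\{\{u,v\},\{v,w\},\{w,u\}\}\subseteq E^{(t)}$ with $u,v,w$ distinct; $\Delta^{(t)}$ is the set of all triangles of $G^{(t)}$. TRIEST-BASE maintains an edge sample $\mathcal{S}$ (initially empty) by reservoir sampling with capacity $M$: at time $t$, if $t\le M$ the edge $e_t$ is inserted into $\mathcal{S}$; if $t>M$, with probability $M/t$ an edge chosen uniformly at random from $\mathcal{S}$ is removed from $\mathcal{S}$ and then $e_t$ is inserted, otherwise $\mathcal{S}$ is unchanged. It maintains a counter $\tau$ (initially $0$): immediately after an edge $\{u,v\}$ is inserted into (resp. removed from) $\mathcal{S}$, $\tau$ is increased (resp. decreased) by $|\mathcal{N}^{\mathcal{S}}_{u,v}|$, the number of vertices $c$ such that both $\{c,u\}$ and $\{c,v\}$ are in the current $\mathcal{S}$. $\tau^{(t)}$ denotes the value of $\tau$ at the end of time step $t$. For positive integers $a\le\min\{M,b\}$, $\xi_{a,b}=1$ if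 $b\le M$ and $\xi_{a,b}=\prod_{i=0}^{a-1}\frac{b-i}{M-i}$ otherwise; $\xi^{(t)}=\xi_{3,t}$. The algorithm's estimate of $|\Delta^{(t)}|$ is $\xi^{(t)}\tau^{(t)}$. *)

theory Defs
  imports "HOL-Probability.Probability"
begin

text \<open>Edges are 2-element vertex sets. A stream is a function es :: nat => 'a set;
  es t is the edge arriving at time t (t = 1,2,...).\<close>

definition edges_upto :: "(nat \<Rightarrow> 'a set) \<Rightarrow> nat \<Rightarrow> 'a set set" where
  "edges_upto es t = es ` {1..t}"

definition triangles :: "'a set set \<Rightarrow> 'a set set set" where
  "triangles E = {T. \<exists>u v w. u \<noteq> v \<and> v \<noteq> w \<and> w \<noteq> u \<and>
                     T = {{u,v},{v,w},{w,u}} \<and> T \<subseteq> E}"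

definition nbr_count :: "'a set set \<Rightarrow> 'a set \<Rightarrow> int" where
  "nbr_count S e = int (card {c. \<exists>u v. e = {u,v} \<and> u \<noteq> v \<and> {c,u} \<in> S \<and> {c,v} \<in> S})"

text \<open>State: (sample S, counter tau). Insert / remove an edge, updating tau
  with the neighbourhood count in the sample right after the operation.\<close>
definition ins_edge :: "'a set \<Rightarrow> 'a set set \<times> int \<Rightarrow> 'a set set \<times> int" where
  "ins_edge e st = (let S' = insert e (fst st) in (S', snd st + nbr_count S' e))"

definition del_edge :: "'a set \<Rightarrow> 'a set set \<times> int \<Rightarrow> 'a set set \<times> int" where
  "del_edge e st = (let S' = fst st - {e} in (S', snd st - nbr_count S' e))"

definition triest_step :: "nat \<Rightarrow> nat \<Rightarrow> 'a set \<Rightarrow> 'a set set \<times> int \<Rightarrow> ('a set set \<times> int) pmf" where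
  "triest_step M t e st =
     (if t \<le> M then return_pmf (ins_edge e st)
      else bind_pmf (bernoulli_pmf (real M / real t))
             (\<lambda>b. if b then map_pmf (\<lambda>f. ins_edge e (del_edge f st)) (pmf_of_set (fst st))
                  else return_pmf st))"

fun triest_base :: "nat \<Rightarrow> (nat \<Rightarrow> 'a set) \<Rightarrow> nat \<Rightarrow> ('a set set \<times> int) pmf" where
  "triest_base M es 0 = return_pmf ({}, 0)"
| "triest_base M es (Suc t) = bind_pmf (triest_base M es t) (triest_step M (Suc t) (es (Suc t)))"

definition xi :: "nat \<Rightarrow> nat \<Rightarrow> nat \<Rightarrow> real" where
  "xi M a b = (if b \<le> M then 1 else (\<Prod>i<a. (real b - real i) / (real M - real i)))"

end

theory Submission
  imports Defs
begin


definition twosets :: "'a set set \<Rightarrow> bool" where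
  "twosets S = (\<forall>x\<in>S. \<exists>u v. u \<noteq> v \<and> x = {u,v})"

lemma nbr_count_eq:
  assumes "u \<noteq> v"
  shows "nbr_count S {u,v} = int (card {c. {c,u} \<in> S \<and> {c,v} \<in> S})"
  unfolding nbr_count_def
  apply (rule arg_cong[where f="\<lambda>X. int (card X)"])
  using assms by (auto simp: doubleton_eq_iff)

lemma nbr_count_insert:
  assumes "twosets S" "u \<noteq> v"
  shows "nbr_count (insert {u,v} S) {u,v} = nbr_count S {u,v}"
  unfolding nbr_count_eq[OF assms(2)]
  apply (rule arg_cong[where f="\<lambda>X. int (card X)"])
  using assms by (auto simp: doubleton_eq_iff twosets_def)

lemma tri_fin: "finite S \<Longrightarrow> finite (triangles S)"
  by (rule finite_subset[of _ "Pow S"]) (auto simp: triangles_def)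

lemma t1: "{{a,b},{b,c},{c,a}} = {{b,a},{a,c},{c,b}}" by (simp add: insert_commute)
lemma t2: "{{a,b},{b,c},{c,a}} = {{b,c},{c,a},{a,b}}" by (simp add: insert_commute)
lemma t3: "{{a,b},{b,c},{c,a}} = {{c,b},{b,a},{a,c}}" by (simp add: insert_commute)
lemma t4: "{{a,b},{b,c},{c,a}} = {{c,a},{a,b},{b,c}}" by (simp add: insert_commute)
lemma t5: "{{a,b},{b,c},{c,a}} = {{a,c},{c,b},{b,a}}" by (simp add: insert_commute)

lemma sing_not_two: "twosets S \<Longrightarrow> {c} \<notin> S"
proof
  assume "twosets S" "{c} \<in> S"
  then obtain a b where "a \<noteq> b" "{c} = {a,b}" unfolding twosets_def by blast
  hence "a \<in> {c}" "b \<in> {c}" by blast+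
  thus False using \<open>a \<noteq> b\<close> by simp
qed

lemma triI: "a \<noteq> b \<Longrightarrow> b \<noteq> c \<Longrightarrow> c \<noteq> a \<Longrightarrow> T = {{a,b},{b,c},{c,a}} \<Longrightarrow> T \<subseteq> E \<Longrightarrow> T \<in> triangles E"
  unfolding triangles_def by blast

lemma triE: "T \<in> triangles E \<Longrightarrow> (\<And>a b c. a \<noteq> b \<Longrightarrow> b \<noteq> c \<Longrightarrow> c \<noteq> a \<Longrightarrow> T = {{a,b},{b,c},{c,a}} \<Longrightarrow> T \<subseteq> E \<Longrightarrow> P) \<Longrightarrow> P"
  unfolding triangles_def by blast

lemma tri_sub: "T \<in> triangles E \<Longrightarrow> T \<subseteq> E"
  by (erule triE)

lemma exw: "w \<noteq> u \<Longrightarrow> w \<noteq> v \<Longrightarrow> T = X w \<Longrightarrow> \<exists>w. w \<noteq> u \<and> w \<noteq> v \<and> T = X w"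
  by blast

lemma tri_ins:
  assumes "twosets S" "u \<noteq> v" "{u,v} \<notin> S" "finite S"
  shows "int (card (triangles (insert {u,v} S))) = int (card (triangles S)) + nbr_count S {u,v}"
proof -
  let ?N = "{c. {c,u} \<in> S \<and> {c,v} \<in> S}"
  let ?g = "\<lambda>c. {{u,v},{v,c},{c,u}}"
  have Nuv: "c \<noteq> u \<and> c \<noteq> v" if "c \<in> ?N" for c
  proof -
    have "{u} \<notin> S" "{v} \<notin> S" using sing_not_two[OF assms(1)] by auto
    thus ?thesis using that by auto
  qed
  have split: "triangles (insert {u,v} S) = triangles S \<union> ?g ` ?N"
  proof
    show "triangles (insert {u,v} S) \<subseteq> triangles S \<union> ?g ` ?N"
    proof
      fix T assume T: "T \<in> triangles (insert {u,v} S)"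
      from T obtain a b c where abc: "a \<noteq> b" "b \<noteq> c" "c \<noteq> a"
        "T = {{a,b},{b,c},{c,a}}" "T \<subseteq> insert {u,v} S"
        by (rule triE)
      show "T \<in> triangles S \<union> ?g ` ?N"
      proof (cases "{u,v} \<in> T")
        case False
        hence "T \<subseteq> S" using abc(5) by blast
        hence "T \<in> triangles S" using abc(1-4) by (intro triI)
        thus ?thesis by blast
      next
        case True
        hence "{u,v} = {a,b} \<or> {u,v} = {b,c} \<or> {u,v} = {c,a}" unfolding abc(4) by blast
        hence c6: "(u=a \<and> v=b) \<or> (u=b \<and> v=a) \<or> (u=b \<and> v=c) \<or> (u=c \<and> v=b) \<or> (u=c \<and> v=a) \<or> (u=a \<and> v=c)"
          unfolding doubleton_eq_iff by blast
        note exw' = exw[where X="\<lambda>w. {{u,v},{v,w},{w,u}}" and u=u and v=v and T=T]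
        have "\<exists>w. w \<noteq> u \<and> w \<noteq> v \<and> T = ?g w"
        proof -
          { assume h: "u=a" "v=b"
            have "T = ?g c" unfolding abc(4) h by (rule refl)
            moreover have "c \<noteq> u" "c \<noteq> v" using abc(1-3) h by simp_all
            ultimately have ?thesis using exw' by simp }
          moreover
          { assume h: "u=b" "v=a"
            have "T = ?g c" unfolding abc(4) h by (rule t1)
            moreover have "c \<noteq> u" "c \<noteq> v" using abc(1-3) h by simp_all
            ultimately have ?thesis using exw' by simp }
          moreover
          { assume h: "u=b" "v=c"
            have "T = ?g a" unfolding abc(4) h by (rule t2)
            moreover have "a \<noteq> u" "a \<noteq> v" using abc(1-3) h by simp_all
            ultimately have ?thesis using exw' by simp }
          moreover
          { assume h: "u=c" "v=b"
            have "T = ?g a" unfolding abc(4) h by (rule t3)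
            moreover have "a \<noteq> u" "a \<noteq> v" using abc(1-3) h by simp_all
            ultimately have ?thesis using exw' by simp }
          moreover
          { assume h: "u=c" "v=a"
            have "T = ?g b" unfolding abc(4) h by (rule t4)
            moreover have "b \<noteq> u" "b \<noteq> v" using abc(1-3) h by simp_all
            ultimately have ?thesis using exw' by simp }
          moreover
          { assume h: "u=a" "v=c"
            have "T = ?g b" unfolding abc(4) h by (rule t5)
            moreover have "b \<noteq> u" "b \<noteq> v" using abc(1-3) h by simp_all
            ultimately have ?thesis using exw' by simp }
          ultimately show ?thesis using c6 by argo
        qed
        then obtain w where w: "w \<noteq> u" "w \<noteq> v" "T = ?g w" by blast
        have "{v,w} \<in> T" "{w,u} \<in> T" unfolding w(3) by simp_all
        hence "{v,w} \<in> insert {u,v} S" "{w,u} \<in> insert {u,v} S" using abc(5) by blast+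
        moreover have "{v,w} \<noteq> {u,v}" "{w,u} \<noteq> {u,v}" using w(1,2) assms(2)
          unfolding doubleton_eq_iff by blast+
        ultimately have "{v,w} \<in> S" "{w,u} \<in> S" by simp_all
        moreover have "{v,w} = {w,v}" by (rule insert_commute)
        ultimately have "w \<in> ?N" by simp
        thus ?thesis using w(3) by blast
      qed
    qed
  next
    show "triangles S \<union> ?g ` ?N \<subseteq> triangles (insert {u,v} S)"
    proof
      fix T assume "T \<in> triangles S \<union> ?g ` ?N"
      then show "T \<in> triangles (insert {u,v} S)"
      proof
        assume "T \<in> triangles S"
        then obtain a b c where "a \<noteq> b" "b \<noteq> c" "c \<noteq> a"
          "T = {{a,b},{b,c},{c,a}}" "T \<subseteq> S" by (rule triE)
        thus ?thesis by (intro triI[of a b c]) auto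
      next
        assume "T \<in> ?g ` ?N"
        then obtain c where c: "c \<in> ?N" "T = ?g c" by blast
        have "{c,v} \<in> S" "{c,u} \<in> S" using c(1) by simp_all
        moreover have "{v,c} = {c,v}" by (rule insert_commute)
        ultimately have sub: "T \<subseteq> insert {u,v} S" unfolding c(2) by simp
        show ?thesis using Nuv[OF c(1)] assms(2) c(2) sub by (intro triI[of u v c]) auto
      qed
    qed
  qed
  have disj: "triangles S \<inter> ?g ` ?N = {}"
  proof (rule ccontr)
    assume "triangles S \<inter> ?g ` ?N \<noteq> {}"
    then obtain T where T: "T \<in> triangles S" "T \<in> ?g ` ?N" by blast
    from T(2) have "{u,v} \<in> T" by blast
    thus False using tri_sub[OF T(1)] assms(3) by blast
  qed
  have inj: "inj_on ?g ?N"
  proof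
    fix c d assume c: "c \<in> ?N" and d: "d \<in> ?N" and eq: "?g c = ?g d"
    from Nuv[OF c] Nuv[OF d] have n: "c \<noteq> u" "c \<noteq> v" "d \<noteq> u" "d \<noteq> v" by auto
    have "{v,c} \<in> ?g c" by simp
    hence "{v,c} \<in> ?g d" unfolding eq .
    hence "{v,c} = {u,v} \<or> {v,c} = {v,d} \<or> {v,c} = {d,u}" by blast
    thus "c = d" using n assms(2) unfolding doubleton_eq_iff by blast
  qed
  have finN: "finite ?N"
  proof -
    have sub: "?N \<subseteq> \<Union>S" by auto
    have "\<forall>x\<in>S. finite x" using assms(1) unfolding twosets_def by auto
    hence "finite (\<Union>S)" using assms(4) by (intro finite_Union) auto
    thus ?thesis using sub by (rule finite_subset[rotated])
  qed
  have "card (triangles (insert {u,v} S)) = card (triangles S) + card ?N"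
    unfolding split using disj tri_fin[OF assms(4)] finN
    by (simp add: card_Un_disjoint card_image[OF inj])
  thus ?thesis using nbr_count_eq[OF assms(2)] by simp
qed



lemma count_pairs:
  assumes fin: "finite E" and eE: "e \<notin> E" and cE: "card E = k" and M1: "1 \<le> M"
    and x: "x \<subseteq> insert e E" "card x = M" "e \<in> x"
  shows "(\<Sum>S\<in>{S. S \<subseteq> E \<and> card S = M}. card {f\<in>S. insert e (S - {f}) = x}) = k + 1 - M"
proof -
  let ?A = "{S. S \<subseteq> E \<and> card S = M}"
  let ?B = "\<lambda>S. {f\<in>S. insert e (S - {f}) = x}"
  let ?y = "x - {e}"
  have finA: "finite ?A" using fin by simp
  have y: "?y \<subseteq> E" "card ?y = M - 1" using x by auto
  have "Sigma ?A ?B = (\<lambda>f. (insert f ?y, f)) ` (E - ?y)"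
  proof (intro equalityI subsetI)
    fix p assume "p \<in> Sigma ?A ?B"
    then obtain S f where p: "p = (S,f)" "S \<subseteq> E" "card S = M" "f \<in> S" "insert e (S - {f}) = x"
      by blast
    have "S - {f} = ?y" using p(2,5) eE by auto
    hence "S = insert f ?y" "f \<notin> ?y" using p(4) by auto
    thus "p \<in> (\<lambda>f. (insert f ?y, f)) ` (E - ?y)" using p by auto
  next
    fix p assume "p \<in> (\<lambda>f. (insert f ?y, f)) ` (E - ?y)"
    then obtain f where f: "p = (insert f ?y, f)" "f \<in> E" "f \<notin> ?y" by blast
    have fy: "finite ?y" using y(1) fin finite_subset by blast
    have "card (insert f ?y) = M" using f(3) y(2) fy M1 by simp
    moreover have "insert e (insert f ?y - {f}) = x" using f(3) x(3) by auto
    ultimately show "p \<in> Sigma ?A ?B" using f y(1) by auto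
  qed
  moreover have "inj_on (\<lambda>f. (insert f ?y, f)) (E - ?y)" by (rule inj_onI) auto
  ultimately have "card (Sigma ?A ?B) = card (E - ?y)" by (simp add: card_image)
  also have "\<dots> = k - (M - 1)" using y fin cE finite_subset[OF y(1) fin] by (simp add: card_Diff_subset)
  also have "\<dots> = k + 1 - M" using M1 by simp
  finally have "card (Sigma ?A ?B) = k + 1 - M" .
  moreover have "\<forall>S\<in>?A. finite (?B S)" using fin by (auto intro: finite_subset)
  ultimately show ?thesis using finA by simp
qed

lemma reservoir:
  assumes fin: "finite E" and eE: "e \<notin> E" and cE: "card E = k" and M1: "1 \<le> M" and Mk: "M \<le> k"
  shows "bind_pmf (pmf_of_set {S. S \<subseteq> E \<and> card S = M})
          (\<lambda>S. bind_pmf (bernoulli_pmf (real M / real (Suc k)))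
             (\<lambda>b. if b then map_pmf (\<lambda>f. insert e (S - {f})) (pmf_of_set S) else return_pmf S))
         = pmf_of_set {S. S \<subseteq> insert e E \<and> card S = M}"
    (is "bind_pmf (pmf_of_set ?A) ?R = pmf_of_set ?A'")
proof (rule pmf_eqI)
  fix x
  let ?p = "real M / real (Suc k)"
  let ?h = "\<lambda>S f. insert e (S - {f})"
  have cA: "card ?A = k choose M" using n_subsets[OF fin] cE by simp
  have cA': "card ?A' = Suc k choose M" using n_subsets[of "insert e E"] fin eE cE by simp
  have Apos: "(k choose M) > 0" using Mk by simp
  have A'pos: "(Suc k choose M) > 0" using Mk by simp
  have finA: "finite ?A" "?A \<noteq> {}" using fin apply simp using cA Apos by (metis card.empty less_not_refl)
  have finA': "finite ?A'" "?A' \<noteq> {}" using fin apply simp using cA' A'pos by (metis card.empty less_not_refl)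
  have p01: "0 \<le> ?p" "?p \<le> 1" using Mk by auto
  have Sne: "S \<in> ?A \<Longrightarrow> finite S \<and> S \<noteq> {} \<and> card S = M" for S
    using M1 fin finite_subset by fastforce
  have pR: "pmf (?R S) x = real (card {f\<in>S. ?h S f = x}) / real M * ?p + indicator {x} S * (1 - ?p)"
    if S: "S \<in> ?A" for S
  proof -
    have "pmf (?R S) x = pmf (map_pmf (?h S) (pmf_of_set S)) x * ?p + pmf (return_pmf S) x * (1 - ?p)"
      unfolding pmf_bind integral_bernoulli_pmf[OF p01] by simp
    also have "pmf (map_pmf (?h S) (pmf_of_set S)) x = real (card {f\<in>S. ?h S f = x}) / real M"
      using Sne[OF S] by (simp add: pmf_map measure_pmf_of_set vimage_def Int_def)
    finally show ?thesis by simp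
  qed
  have key: "(1 - ?p) / real (k choose M) = 1 / real (Suc k choose M)"
   and key2: "real (k + 1 - M) * (?p / real M) / real (k choose M) = 1 / real (Suc k choose M)"
  proof -
    have b: "(Suc k - M) * (Suc k choose M) = Suc k * (k choose M)"
      using binomial_absorb_comp[of "Suc k" M] by simp
    hence b': "real (Suc k - M) * real (Suc k choose M) = real (Suc k) * real (k choose M)"
      by (metis of_nat_mult)
    have s: "real (Suc k - M) = real k + 1 - real M" using Mk by simp
    have ap: "0 < real (k choose M)" "0 \<le> real k * real (k choose M)" using Apos by auto
    have nz: "real (k choose M) + real k * real (k choose M) \<noteq> 0" using ap by linarith
    show k1: "(1 - ?p) / real (k choose M) = 1 / real (Suc k choose M)"
      using b' Apos A'pos nz unfolding s by (simp add: field_simps)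
    show "real (k + 1 - M) * (?p / real M) / real (k choose M) = 1 / real (Suc k choose M)"
    proof -
      have g: "\<And>a m::real. m > 0 \<Longrightarrow> a > 0 \<Longrightarrow> (a - m) * (m / a / m) = 1 - m / a"
        by (simp add: field_simps)
      have e1: "real (k + 1 - M) = real (Suc k) - real M" using Mk by simp
      have "real (k + 1 - M) * (?p / real M) = 1 - ?p" unfolding e1 by (rule g) (use M1 in auto)
      thus ?thesis using k1 by simp
    qed
  qed
  have lhs: "pmf (bind_pmf (pmf_of_set ?A) ?R) x = (\<Sum>S\<in>?A. pmf (?R S) x) / real (k choose M)"
    using pmf_bind_pmf_of_set[OF finA(2,1)] cA by simp
  show "pmf (bind_pmf (pmf_of_set ?A) ?R) x = pmf (pmf_of_set ?A') x"
  proof (cases "x \<in> ?A'")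
    case False
    have z: "pmf (?R S) x = 0" if S: "S \<in> ?A" for S
    proof -
      have emp: "{f\<in>S. ?h S f = x} = {}"
      proof (rule ccontr)
        assume "{f\<in>S. ?h S f = x} \<noteq> {}"
        then obtain f where f: "f \<in> S" "?h S f = x" by blast
        have en: "e \<notin> S - {f}" using S eE by auto
        have c1: "card (S - {f}) = M - 1" using f(1) Sne[OF S] by simp
        have fin': "finite (S - {f})" using Sne[OF S] by simp
        have "card x = Suc (card (S - {f}))" unfolding f(2)[symmetric]
          using fin' en by (rule card_insert_disjoint)
        hence "card x = M" using c1 M1 by simp
        thus False using False f S by auto
      qed
      have "S \<noteq> x" using S False by auto
      hence "indicator {x} S = (0::real)" by (simp add: indicator_def)
      thus ?thesis using pR[OF S, unfolded emp] by simp
    qed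
    have "(\<Sum>S\<in>?A. pmf (?R S) x) = 0" by (rule sum.neutral) (use z in blast)
    moreover have "pmf (pmf_of_set ?A') x = 0" using False finA' by simp
    ultimately show ?thesis using lhs by simp
  next
    case True
    have r: "pmf (pmf_of_set ?A') x = 1 / real (Suc k choose M)" using True finA' cA' by simp
    show ?thesis
    proof (cases "e \<in> x")
      case False
      have x: "x \<in> ?A" using True False by auto
      have "(\<Sum>S\<in>?A. pmf (?R S) x) = (\<Sum>S\<in>?A. (if S = x then 1 - ?p else 0))"
      proof (rule sum.cong[OF refl])
        fix S assume S: "S \<in> ?A"
        have emp: "{f\<in>S. ?h S f = x} = {}" using False by auto
        show "pmf (?R S) x = (if S = x then 1 - ?p else 0)"
          using pR[OF S, unfolded emp] by (simp add: indicator_def)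
      qed
      also have "\<dots> = 1 - ?p" using x finA by (simp add: sum.delta)
      finally have sm: "(\<Sum>S\<in>?A. pmf (?R S) x) = 1 - ?p" .
      show ?thesis unfolding lhs sm r by (rule key)
    next
      case ex: True
      have "(\<Sum>S\<in>?A. pmf (?R S) x) = (\<Sum>S\<in>?A. real (card {f\<in>S. ?h S f = x}) * (?p / real M))"
      proof (rule sum.cong[OF refl])
        fix S assume S: "S \<in> ?A"
        have "S \<noteq> x" using S ex eE by auto
        hence "indicator {x} S = (0::real)" by (simp add: indicator_def)
        thus "pmf (?R S) x = real (card {f\<in>S. ?h S f = x}) * (?p / real M)"
          using pR[OF S] by simp
      qed
      also have "\<dots> = (\<Sum>S\<in>?A. real (card {f\<in>S. ?h S f = x})) * (?p / real M)"
        by (rule sum_distrib_right[symmetric])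
      also have "(\<Sum>S\<in>?A. real (card {f\<in>S. ?h S f = x})) = real (\<Sum>S\<in>?A. card {f\<in>S. ?h S f = x})"
        by (rule of_nat_sum[symmetric])
      also have "(\<Sum>S\<in>?A. card {f\<in>S. ?h S f = x}) = k + 1 - M"
        using True ex by (intro count_pairs[OF fin eE cE M1]) auto
      finally have sm: "(\<Sum>S\<in>?A. pmf (?R S) x) = real (k + 1 - M) * (?p / real M)" .
      show ?thesis unfolding lhs sm r by (rule key2)
    qed
  qed
qed



definition phi :: "'a set set \<Rightarrow> 'a set set \<times> int" where
  "phi S = (S, int (card (triangles S)))"

lemma ball_sub: "\<forall>x\<in>S. P x \<Longrightarrow> T \<subseteq> S \<Longrightarrow> \<forall>x\<in>T. P x" by blast

lemma twosets_sub: "twosets S \<Longrightarrow> T \<subseteq> S \<Longrightarrow> twosets T"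
  unfolding twosets_def by (rule ball_sub)

lemma twosets_D: "twosets S \<Longrightarrow> f \<in> S \<Longrightarrow> \<exists>u v. u \<noteq> v \<and> f = {u,v}"
  unfolding twosets_def by (rule bspec)

lemma ins_phi:
  assumes "twosets S" "finite S" "u \<noteq> v" "{u,v} \<notin> S"
  shows "ins_edge {u,v} (phi S) = phi (insert {u,v} S)"
  using tri_ins[OF assms(1,3,4,2)] nbr_count_insert[OF assms(1,3)]
  by (simp add: ins_edge_def phi_def)

lemma del_phi:
  assumes "twosets S" "finite S" "f \<in> S"
  shows "del_edge f (phi S) = phi (S - {f})"
proof -
  obtain u v where uv: "u \<noteq> v" "f = {u,v}" using twosets_D[OF assms(1,3)] by blast
  have t: "twosets (S - {f})" using assms(1) by (rule twosets_sub) blast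
  have nin: "{u,v} \<notin> S - {f}" using uv(2) by simp
  have fin: "finite (S - {f})" using assms(2) by simp
  have "int (card (triangles (insert {u,v} (S - {f})))) = int (card (triangles (S - {f}))) + nbr_count (S - {f}) {u,v}"
    by (rule tri_ins[OF t uv(1) nin fin])
  moreover have "insert {u,v} (S - {f}) = S" using assms(3) uv(2) by blast
  ultimately have "int (card (triangles S)) = int (card (triangles (S - {f}))) + nbr_count (S - {f}) f"
    using uv(2) by simp
  thus ?thesis by (simp add: del_edge_def phi_def Let_def)
qed

lemma step_big:
  assumes "twosets S" "finite S" "u \<noteq> v" "{u,v} \<notin> S" "S \<noteq> {}" "\<not> Suc k \<le> M"
  shows "triest_step M (Suc k) {u,v} (phi S) =
    map_pmf phi (bind_pmf (bernoulli_pmf (real M / real (Suc k)))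
             (\<lambda>b. if b then map_pmf (\<lambda>f. insert {u,v} (S - {f})) (pmf_of_set S) else return_pmf S))"
proof -
  have "map_pmf (\<lambda>f. ins_edge {u,v} (del_edge f (phi S))) (pmf_of_set S)
        = map_pmf phi (map_pmf (\<lambda>f. insert {u,v} (S - {f})) (pmf_of_set S))"
    unfolding map_pmf_comp
  proof (rule map_pmf_cong[OF refl])
    fix f assume "f \<in> set_pmf (pmf_of_set S)"
    hence f: "f \<in> S" using assms by simp
    have t: "twosets (S - {f})" using assms(1) by (rule twosets_sub) blast
    show "ins_edge {u,v} (del_edge f (phi S)) = phi (insert {u,v} (S - {f}))"
      using del_phi[OF assms(1,2) f] ins_phi[OF t _ assms(3)] assms(2,4) by simp
  qed
  note mapeq = this
  have fst: "fst (phi S) = S" by (simp add: phi_def)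
  have "triest_step M (Suc k) {u,v} (phi S) = bind_pmf (bernoulli_pmf (real M / real (Suc k)))
     (\<lambda>b. if b then map_pmf phi (map_pmf (\<lambda>f. insert {u,v} (S - {f})) (pmf_of_set S))
          else return_pmf (phi S))"
    unfolding triest_step_def fst mapeq using assms(6) by simp
  also have "\<dots> = map_pmf phi (bind_pmf (bernoulli_pmf (real M / real (Suc k)))
             (\<lambda>b. if b then map_pmf (\<lambda>f. insert {u,v} (S - {f})) (pmf_of_set S) else return_pmf S))"
    unfolding map_bind_pmf by (rule bind_pmf_cong[OF refl]) simp
  finally show ?thesis .
qed

lemma edges_Suc: "edges_upto es (Suc k) = insert (es (Suc k)) (edges_upto es k)"
  by (simp add: edges_upto_def atLeastAtMostSuc_conv)

lemma tri_empty: "triangles {} = {}"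
  by (auto simp: triangles_def)

lemma dist:
  assumes M1: "1 \<le> M"
    and es2: "\<forall>i\<in>{1..t}. \<exists>u v. u \<noteq> v \<and> es i = {u, v}"
    and inj: "inj_on es {1..t}"
  shows "k \<le> t \<Longrightarrow> triest_base M es k =
     map_pmf phi (pmf_of_set {S. S \<subseteq> edges_upto es k \<and> card S = min k M})"
proof (induction k)
  case 0
  have "{S. S \<subseteq> edges_upto es 0 \<and> card S = min 0 M} = {{}}" by (auto simp: edges_upto_def)
  thus ?case by (simp add: pmf_of_set_singleton phi_def tri_empty)
next
  case (Suc k)
  let ?E = "edges_upto es k"
  let ?e = "es (Suc k)"
  have IH: "triest_base M es k = map_pmf phi (pmf_of_set {S. S \<subseteq> ?E \<and> card S = min k M})"
    using Suc by simp
  have finE: "finite ?E" by (simp add: edges_upto_def)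
  have cE: "card ?E = k" unfolding edges_upto_def
    using Suc.prems by (subst card_image) (auto intro: inj_on_subset[OF inj])
  have eE: "?e \<notin> ?E" unfolding edges_upto_def
  proof
    assume "?e \<in> es ` {1..k}"
    then obtain i where "i \<in> {1..k}" "es (Suc k) = es i" by blast
    hence i: "i \<in> {1..k}" "es (Suc k) = es i" by blast+
    have "Suc k = i"
      by (rule inj_onD[OF inj i(2)]) (use i Suc.prems in auto)
    thus False using i(1) by simp
  qed
  have tw: "twosets ?E" unfolding twosets_def
  proof (rule ballI)
    fix x assume "x \<in> ?E"
    then obtain i where i: "i \<in> {1..k}" "x = es i" by (auto simp: edges_upto_def)
    have "i \<in> {1..t}" using i(1) Suc.prems by simp
    from bspec[OF es2 this] show "\<exists>u v. u \<noteq> v \<and> x = {u,v}" unfolding i(2) .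
  qed
  obtain u v where uv: "u \<noteq> v" "?e = {u,v}" using es2 Suc.prems by fastforce
  have base: "triest_base M es (Suc k) =
      bind_pmf (pmf_of_set {S. S \<subseteq> ?E \<and> card S = min k M}) (\<lambda>S. triest_step M (Suc k) ?e (phi S))"
    using IH by (simp add: bind_map_pmf)
  show ?case
  proof (cases "Suc k \<le> M")
    case True
    have m1: "min k M = k" "min (Suc k) M = Suc k" using True by simp_all
    have eq1: "S = ?E" if "S \<subseteq> ?E" "card S = k" for S
      using card_subset_eq[OF finE that(1)] that(2) cE by simp
    have U: "{S. S \<subseteq> ?E \<and> card S = min k M} = {?E}"
      unfolding m1 using eq1 cE by blast
    have cE': "card (insert ?e ?E) = Suc k" using cE finE eE by simp
    have finE': "finite (insert ?e ?E)" using finE by simp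
    have eq2: "S = insert ?e ?E" if "S \<subseteq> insert ?e ?E" "card S = Suc k" for S
      using card_subset_eq[OF finE' that(1)] that(2) cE' by simp
    have U': "{S. S \<subseteq> edges_upto es (Suc k) \<and> card S = min (Suc k) M} = {insert ?e ?E}"
      unfolding edges_Suc m1 using eq2 cE' by blast
    show ?thesis unfolding base U U' pmf_of_set_singleton bind_return_pmf
      using True ins_phi[OF tw finE uv(1)] eE uv by (simp add: triest_step_def)
  next
    case False
    have mk: "min k M = M" "min (Suc k) M = M" using False by auto
    let ?A = "{S. S \<subseteq> ?E \<and> card S = M}"
    have "triest_base M es (Suc k) = bind_pmf (pmf_of_set ?A)
       (\<lambda>S. map_pmf phi (bind_pmf (bernoulli_pmf (real M / real (Suc k)))
             (\<lambda>b. if b then map_pmf (\<lambda>f. insert ?e (S - {f})) (pmf_of_set S) else return_pmf S)))"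
      unfolding base mk
    proof (rule bind_pmf_cong[OF refl])
      fix S assume "S \<in> set_pmf (pmf_of_set ?A)"
      moreover have "finite ?A" using finE by simp
      moreover have "?A \<noteq> {}"
      proof
        assume "?A = {}"
        hence "card ?A = 0" by (simp only: card.empty)
        moreover have "card ?A = k choose M" using n_subsets[OF finE, of M] cE by simp
        moreover have "k choose M > 0" using False by simp
        ultimately show False by simp
      qed
      ultimately have S: "S \<subseteq> ?E" "card S = M" by auto
      have tS: "twosets S" using tw S(1) by (rule twosets_sub)
      have fS: "finite S" using finE S(1) finite_subset by blast
      have nS: "?e \<notin> S" using eE S(1) by blast
      have neS: "S \<noteq> {}" using S(2) M1 by auto
      have nS': "{u,v} \<notin> S" using nS uv(2) by simp
      show "triest_step M (Suc k) ?e (phi S) = map_pmf phi (bind_pmf (bernoulli_pmf (real M / real (Suc k)))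
             (\<lambda>b. if b then map_pmf (\<lambda>f. insert ?e (S - {f})) (pmf_of_set S) else return_pmf S))"
        unfolding uv(2) by (rule step_big[OF tS fS uv(1) nS' neS False])
    qed
    also have "\<dots> = map_pmf phi (pmf_of_set {S. S \<subseteq> insert ?e ?E \<and> card S = M})"
      unfolding map_bind_pmf[symmetric] using reservoir[OF finE eE cE M1] False by simp
    finally show ?thesis unfolding edges_Suc mk .
  qed
qed



lemma card_tri3: "T \<in> triangles E \<Longrightarrow> card T = 3"
proof (erule triE)
  fix a b c assume h: "a \<noteq> b" "b \<noteq> c" "c \<noteq> a" "T = {{a,b},{b,c},{c,a}}"
  have "{a,b} \<noteq> {b,c}" "{a,b} \<noteq> {c,a}" "{b,c} \<noteq> {c,a}"
    using h(1-3) unfolding doubleton_eq_iff by blast+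
  thus "card T = 3" unfolding h(4) by simp
qed

lemma tri_of_sub: "S \<subseteq> E \<Longrightarrow> triangles S = {T \<in> triangles E. T \<subseteq> S}"
proof (intro equalityI subsetI)
  fix T assume S: "S \<subseteq> E" and T: "T \<in> triangles S"
  from T obtain a b c where h: "a \<noteq> b" "b \<noteq> c" "c \<noteq> a" "T = {{a,b},{b,c},{c,a}}" "T \<subseteq> S"
    by (rule triE)
  have "T \<in> triangles E" using h S by (intro triI[of a b c]) auto
  thus "T \<in> {T \<in> triangles E. T \<subseteq> S}" using h(5) by blast
next
  fix T assume S: "S \<subseteq> E" and T: "T \<in> {T \<in> triangles E. T \<subseteq> S}"
  hence T1: "T \<in> triangles E" "T \<subseteq> S" by blast+
  from T1(1) obtain a b c where h: "a \<noteq> b" "b \<noteq> c" "c \<noteq> a" "T = {{a,b},{b,c},{c,a}}"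
    by (rule triE)
  show "T \<in> triangles S" using h T1(2) by (intro triI[of a b c])
qed

lemma count_sup:
  assumes fin: "finite E" and cE: "card E = t" and TE: "T \<subseteq> E" and cT: "card T = 3" and M3: "3 \<le> M"
  shows "card {S \<in> {S. S \<subseteq> E \<and> card S = M}. T \<subseteq> S} = (t - 3) choose (M - 3)"
proof -
  have finT: "finite T" using fin TE by (rule finite_subset[rotated])
  have eq: "{S \<in> {S. S \<subseteq> E \<and> card S = M}. T \<subseteq> S} = (\<lambda>B. B \<union> T) ` {B. B \<subseteq> E - T \<and> card B = M - 3}"
  proof (intro equalityI subsetI)
    fix S assume "S \<in> {S \<in> {S. S \<subseteq> E \<and> card S = M}. T \<subseteq> S}"
    hence S: "S \<subseteq> E" "card S = M" "T \<subseteq> S" by blast+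
    have finS: "finite S" using fin S(1) by (rule finite_subset[rotated])
    have "card (S - T) = M - 3" using card_Diff_subset[OF finT S(3)] S(2) cT by simp
    moreover have "S - T \<subseteq> E - T" using S(1) by blast
    moreover have "S = (S - T) \<union> T" using S(3) by blast
    ultimately show "S \<in> (\<lambda>B. B \<union> T) ` {B. B \<subseteq> E - T \<and> card B = M - 3}" by blast
  next
    fix S assume "S \<in> (\<lambda>B. B \<union> T) ` {B. B \<subseteq> E - T \<and> card B = M - 3}"
    then obtain B where B: "B \<subseteq> E - T" "card B = M - 3" "S = B \<union> T" by blast
    have finB: "finite B" using B(1) fin by (meson finite_Diff finite_subset)
    have "card S = M" unfolding B(3) using card_Un_disjoint[OF finB finT] B(1,2) cT M3 by auto
    moreover have "S \<subseteq> E" "T \<subseteq> S" using B(1,3) TE by blast+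
    ultimately show "S \<in> {S \<in> {S. S \<subseteq> E \<and> card S = M}. T \<subseteq> S}" by blast
  qed
  have inj: "inj_on (\<lambda>B. B \<union> T) {B. B \<subseteq> E - T \<and> card B = M - 3}"
  proof (rule inj_onI)
    fix B1 B2 assume "B1 \<in> {B. B \<subseteq> E - T \<and> card B = M - 3}" "B2 \<in> {B. B \<subseteq> E - T \<and> card B = M - 3}"
      "B1 \<union> T = B2 \<union> T"
    thus "B1 = B2" by blast
  qed
  have "card (E - T) = t - 3" using card_Diff_subset[OF finT TE] cE cT by simp
  moreover have "finite (E - T)" using fin by simp
  ultimately show ?thesis unfolding eq card_image[OF inj] using n_subsets by metis
qed

lemma sum_tri:
  assumes fin: "finite E" and cE: "card E = t" and M3: "3 \<le> M"
  shows "(\<Sum>S\<in>{S. S \<subseteq> E \<and> card S = M}. card (triangles S))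
         = card (triangles E) * ((t - 3) choose (M - 3))"
proof -
  let ?U = "{S. S \<subseteq> E \<and> card S = M}"
  let ?D = "triangles E"
  have finU: "finite ?U" using fin by simp
  have finD: "finite ?D" using fin by (rule tri_fin)
  have "(\<Sum>S\<in>?U. card (triangles S)) = (\<Sum>S\<in>?U. \<Sum>T\<in>?D. (if T \<subseteq> S then 1 else 0))"
  proof (rule sum.cong[OF refl])
    fix S assume "S \<in> ?U"
    hence e1: "triangles S = {T \<in> ?D. T \<subseteq> S}" by (intro tri_of_sub) blast
    have "card (triangles S) = card {T \<in> ?D. T \<subseteq> S}" unfolding e1 ..
    also have "\<dots> = (\<Sum>T\<in>{T \<in> ?D. T \<subseteq> S}. 1::nat)" by simp
    also have "\<dots> = (\<Sum>T\<in>?D. (if T \<subseteq> S then 1 else 0))" by (rule sum.inter_filter[OF finD])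
    finally show "card (triangles S) = (\<Sum>T\<in>?D. (if T \<subseteq> S then 1 else 0))" by simp
  qed
  also have "\<dots> = (\<Sum>T\<in>?D. \<Sum>S\<in>?U. (if T \<subseteq> S then 1 else 0))" by (rule sum.swap)
  also have "\<dots> = (\<Sum>T\<in>?D. (t - 3) choose (M - 3))"
  proof (rule sum.cong[OF refl])
    fix T assume T: "T \<in> ?D"
    have "(\<Sum>S\<in>?U. (if T \<subseteq> S then 1 else 0)) = (\<Sum>S\<in>{S \<in> ?U. T \<subseteq> S}. 1::nat)"
      by (rule sum.inter_filter[OF finU, symmetric])
    also have "\<dots> = card {S \<in> ?U. T \<subseteq> S}" by simp
    also have "\<dots> = (t - 3) choose (M - 3)"
      by (rule count_sup[OF fin cE tri_sub[OF T] card_tri3[OF T] M3])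
    finally show "(\<Sum>S\<in>?U. (if T \<subseteq> S then 1 else 0)) = (t - 3) choose (M - 3)" .
  qed
  also have "\<dots> = card ?D * ((t - 3) choose (M - 3))" by simp
  finally show ?thesis .
qed

lemma gen3:
  fixes x3 x2 x1 m3 m2 m1 A3 A2 A1 A0 :: nat
  assumes a: "x3 * A2 = A3 * m3" and b: "x2 * A1 = A2 * m2" and c: "x1 * A0 = A1 * m1"
  shows "A3 * (m3 * m2 * m1) = x3 * x2 * x1 * A0"
proof -
  have "A3 * (m3 * m2 * m1) = (A3 * m3) * m2 * m1" by (simp add: ac_simps)
  also have "\<dots> = (x3 * A2) * m2 * m1" using a by simp
  also have "\<dots> = x3 * (A2 * m2) * m1" by (simp add: ac_simps)
  also have "\<dots> = x3 * (x2 * A1) * m1" using b by simp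
  also have "\<dots> = x3 * x2 * (A1 * m1)" by (simp add: ac_simps)
  also have "\<dots> = x3 * x2 * (x1 * A0)" using c by simp
  finally show ?thesis by (simp add: ac_simps)
qed

lemma binom3: "(Suc (Suc (Suc t')) choose Suc (Suc (Suc M'))) * (Suc (Suc (Suc M')) * Suc (Suc M') * Suc M')
    = Suc (Suc (Suc t')) * Suc (Suc t') * Suc t' * (t' choose M')"
  by (rule gen3[OF Suc_times_binomial_eq[of "Suc (Suc t')" "Suc (Suc M')"]
                   Suc_times_binomial_eq[of "Suc t'" "Suc M'"]
                   Suc_times_binomial_eq[of "t'" "M'"]])



lemma xi3:
  assumes "M < t"
  shows "xi M 3 t = (real t / real M) * ((real t - 1) / (real M - 1)) * ((real t - 2) / (real M - 2))"
proof -
  have "xi M 3 t = (\<Prod>i<3. (real t - real i) / (real M - real i))"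
    unfolding xi_def using assms by simp
  also have "\<dots> = (real t / real M) * ((real t - 1) / (real M - 1)) * ((real t - 2) / (real M - 2))"
    by (simp add: numeral_3_eq_3 lessThan_Suc ac_simps)
  finally show ?thesis .
qed

lemma fin_arith:
  fixes a Q P b D :: real
  assumes "a > 0" "Q > 0" "a * Q = P * b"
  shows "P / Q * (D * b) / a = D"
proof -
  have "P / Q * (D * b) / a = D * (P * b) / (a * Q)" by (simp add: field_simps)
  also have "\<dots> = D" unfolding assms(3)[symmetric] using assms(1,2) by simp
  finally show ?thesis .
qed

theorem theorem4p2:
  fixes M t :: nat and es :: "nat \<Rightarrow> 'a set"
  assumes "M \<ge> 6"
    and "\<forall>i\<in>{1..t}. \<exists>u v. u \<noteq> v \<and> es i = {u, v}"
    and "inj_on es {1..t}"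
  shows "(t \<le> M \<longrightarrow> (\<forall>st \<in> set_pmf (triest_base M es t).
            xi M 3 t * real_of_int (snd st) = real_of_int (snd st) \<and>
            real_of_int (snd st) = real (card (triangles (edges_upto es t)))))
       \<and> (t > M \<longrightarrow> measure_pmf.expectation (triest_base M es t)
              (\<lambda>st. xi M 3 t * real_of_int (snd st))
            = real (card (triangles (edges_upto es t))))"
proof -
  let ?E = "edges_upto es t"
  have M1: "1 \<le> M" using assms(1) by simp
  have d: "triest_base M es t = map_pmf phi (pmf_of_set {S. S \<subseteq> ?E \<and> card S = min t M})"
    by (rule dist[OF M1 assms(2,3) order_refl])
  have finE: "finite ?E" by (simp add: edges_upto_def)
  have cE: "card ?E = t" unfolding edges_upto_def using assms(3) by (simp add: card_image)
  show ?thesis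
  proof (intro conjI impI)
    assume tM: "t \<le> M"
    have m1: "min t M = t" using tM by simp
    have eq1: "S = ?E" if "S \<subseteq> ?E" "card S = t" for S
      using card_subset_eq[OF finE that(1)] that(2) cE by simp
    have U: "{S. S \<subseteq> ?E \<and> card S = min t M} = {?E}"
      unfolding m1 using eq1 cE by blast
    have st: "set_pmf (triest_base M es t) = {phi ?E}"
      unfolding d U pmf_of_set_singleton by simp
    have x1: "xi M 3 t = 1" unfolding xi_def using tM by simp
    show "\<forall>st \<in> set_pmf (triest_base M es t).
            xi M 3 t * real_of_int (snd st) = real_of_int (snd st) \<and>
            real_of_int (snd st) = real (card (triangles ?E))"
      unfolding st x1 by (simp add: phi_def)
  next
    assume tM: "M < t"
    have m1: "min t M = M" using tM by simp
    let ?U = "{S. S \<subseteq> ?E \<and> card S = M}"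
    have cU: "card ?U = t choose M" using n_subsets[OF finE, of M] cE by simp
    have Upos: "t choose M > 0" using tM by simp
    have finU: "finite ?U" using finE by simp
    have neU: "?U \<noteq> {}"
    proof
      assume "?U = {}"
      hence "card ?U = 0" by (simp only: card.empty)
      thus False using cU Upos by simp
    qed
    define t' where "t' = t - 3"
    define M' where "M' = M - 3"
    have t': "t = Suc (Suc (Suc t'))" using tM assms(1) unfolding t'_def by simp
    have M': "M = Suc (Suc (Suc M'))" using assms(1) unfolding M'_def by simp
    have sm: "(\<Sum>S\<in>?U. card (triangles S)) = card (triangles ?E) * (t' choose M')"
      using sum_tri[OF finE cE, of M] assms(1) t' M' by simp
    have "measure_pmf.expectation (triest_base M es t) (\<lambda>st. xi M 3 t * real_of_int (snd st))
        = measure_pmf.expectation (pmf_of_set ?U) (\<lambda>S. xi M 3 t * real (card (triangles S)))"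
      unfolding d m1 by (simp add: phi_def)
    also have "\<dots> = (\<Sum>S\<in>?U. xi M 3 t * real (card (triangles S))) / real (card ?U)"
      by (rule integral_pmf_of_set[OF neU finU])
    also have "\<dots> = xi M 3 t * real (card (triangles ?E) * (t' choose M')) / real (t choose M)"
      unfolding cU sum_distrib_left[symmetric] of_nat_sum[symmetric] sm ..
    also have "\<dots> = real (card (triangles ?E))"
    proof -
      let ?P = "real (Suc (Suc (Suc t')) * Suc (Suc t') * Suc t')"
      let ?Q = "real (Suc (Suc (Suc M')) * Suc (Suc M') * Suc M')"
      let ?a = "real (t choose M)"
      let ?b = "real (t' choose M')"
      let ?D = "real (card (triangles ?E))"
      have id: "?a * ?Q = ?P * ?b" unfolding t' M' of_nat_mult[symmetric]
        using binom3[of t' M'] by (simp only: ac_simps)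
      have x1: "xi M 3 t = (real t * (real t - 1) * (real t - 2)) / (real M * (real M - 1) * (real M - 2))"
        unfolding xi3[OF tM] by (simp only: times_divide_times_eq)
      have p1: "?P = real t * (real t - 1) * (real t - 2)" unfolding t' by (simp add: algebra_simps)
      have q1: "?Q = real M * (real M - 1) * (real M - 2)" unfolding M' by (simp add: algebra_simps)
      have xi: "xi M 3 t = ?P / ?Q" unfolding x1 p1 q1 ..
      have apos: "?a > 0" using Upos by simp
      have Qpos: "?Q > 0" by (simp only: of_nat_0_less_iff) simp
      have "xi M 3 t * real (card (triangles ?E) * (t' choose M')) / ?a = ?P / ?Q * (?D * ?b) / ?a"
        unfolding xi of_nat_mult[of "card (triangles ?E)" "t' choose M'"] ..
      also have "\<dots> = ?D" by (rule fin_arith[OF apos Qpos id])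
      finally show ?thesis .
    qed
    finally show "measure_pmf.expectation (triest_base M es t) (\<lambda>st. xi M 3 t * real_of_int (snd st))
        = real (card (triangles ?E))" .
  qed
qed


end
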